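(* Let $\mathcal{O}$ be a shuffle operad with monomial relations generated by unary operations, i.e. an associative algebra $\mathbb{k}\langle x_1,\dots,x_n\rangle/(\mathcal{G})$ with $\mathcal{G}$ a set of monomials (words); tree monomials are words and divisors are occurrences of subwords. Number the divisors of a word $T$ that are relations (occurrences of elements of $\mathcal{G}$) according to the position of their first letter; this is an Anick numbering. For this numbering, the basis elements $v=T\otimes S_{i_1}\wedge\cdots\wedge S_{i_q}$ of $(\mathcal{A}_\mathcal{G})^{ab}_T$ satisfying conditions (I) and (II) below are precisely the elements $m\otimes S_1\wedge\cdots\wedge S_q$ where $m$ is an Anick $q$-chain and $S_1,\dots,S_q$ are the relations linked to form it (for $q=0$, the generators $x_i\otimes 1$): (I) for each $S_j$ present in $v$, $\partial_j(v)$ is decomposable; (II) for each $S_j$ not present in $v$, there exists $i<j$ with $\partial_i(v\wedge S_j)$ indecomposable.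
   Context: For a word $T$ with relation occurrences $S_1,\dots,S_p$, consider elements $T\otimes S_{i_1}\wedge\cdots\wedge S_{i_q}$ of $\mathbb{k}T\otimes\Lambda(S_1,\dots,S_p)$ (exterior algebra, $S_i$ of degree $1$) with degree $-1$ derivations $\partial_i$, $\partial_i(S_j)=\delta_{ij}$. Such an element is indecomposable if every pair of consecutive letters of $T$ lies inside (and not as the last/first letter boundary of) at least one of $S_{i_1},\dots,S_{i_q}$, i.e. every edge between two consecutive letters of $T$ is an internal edge of one of these occurrences; otherwise it is decomposable. $(\mathcal{A}_\mathcal{G})^{ab}_T$ has as basis the indecomposable such elements. An Anick numbering is a numbering of the relation occurrences such that $i<j<k$ and $S_i\cap S_j\ne\varnothing$ imply $S_i\cap S_k\subset S_j\cap S_k$. Anick chains and their tails are defined inductively: each generator $x_i$ is a $0$-chain equal to its tail; a $q$-chain ($q\ge1$) is a monomial $m=nst$, where $t$ is its tail, $ns$ is a $(q-1)$-chain with tail $s$, and $st$ has exactly one divisor which is a relation from $\mathcal{G}$, this divisor being a right divisor (suffix) of $st$. The relations linked in $m$ are the occurrences of relations created at each step of this inductive construction. *)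

theory Defs
  imports Main "HOL-Library.Sublist"
begin

text \<open>Words over the alphabet 'a (the generators x_1..x_n). An occurrence (divisor) of a relation in a word T is encoded as a pair (p, l):
the subword of T of length l starting at position p (0-based) is an element of G.\<close>

definition occs :: "'a list set \<Rightarrow> 'a list \<Rightarrow> (nat \<times> nat) set" where
  "occs G T = {(p, l). p + l \<le> length T \<and> take l (drop p T) \<in> G}"

definition occ_pos :: "nat \<times> nat \<Rightarrow> nat set" where
  "occ_pos oc = {fst oc ..< fst oc + snd oc}"

text \<open>The edge between letters k and k+1 is an internal edge of occurrence o.\<close>
definition internal_edge :: "nat \<Rightarrow> nat \<times> nat \<Rightarrow> bool" where
  "internal_edge k oc \<longleftrightarrow> fst oc \<le> k \<and> k + 1 < fst oc + snd oc"

definition indecomposable :: "'a list \<Rightarrow> (nat \<times> nat) set \<Rightarrow> bool" where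
  "indecomposable T I \<longleftrightarrow> (\<forall>k. k + 1 < length T \<longrightarrow> (\<exists>oc\<in>I. internal_edge k oc))"

text \<open>Anick numbering, for a numbering given as a strict order "lt" on the occurrences O.\<close>
definition anick_numbering :: "(nat \<times> nat) set \<Rightarrow> (nat \<times> nat \<Rightarrow> nat \<times> nat \<Rightarrow> bool) \<Rightarrow> bool" where
  "anick_numbering Os lt \<longleftrightarrow>
     (\<forall>a\<in>Os. \<forall>b\<in>Os. \<forall>c\<in>Os. lt a b \<longrightarrow> lt b c \<longrightarrow> occ_pos a \<inter> occ_pos b \<noteq> {} \<longrightarrow>
        occ_pos a \<inter> occ_pos c \<subseteq> occ_pos b \<inter> occ_pos c)"

definition first_letter_less :: "nat \<times> nat \<Rightarrow> nat \<times> nat \<Rightarrow> bool" where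
  "first_letter_less a b \<longleftrightarrow> fst a < fst b"

text \<open>Condition (I): for each S_j present in v, \<partial>_j(v) = \<plusminus> T \<otimes> (I - {S_j}) is decomposable.\<close>
definition cond_I :: "'a list \<Rightarrow> (nat \<times> nat) set \<Rightarrow> bool" where
  "cond_I T I \<longleftrightarrow> (\<forall>j\<in>I. \<not> indecomposable T (I - {j}))"

text \<open>Condition (II): for each S_j not present in v there is S_i numbered before S_j with
\<partial>_i(v \<and> S_j) indecomposable; \<partial>_i(v \<and> S_j) is nonzero only if S_i occurs in v,
and then equals \<plusminus> T \<otimes> ((I \<union> {S_j}) - {S_i}).\<close>
definition cond_II :: "'a list set \<Rightarrow> 'a list \<Rightarrow> (nat \<times> nat) set \<Rightarrow> bool" where
  "cond_II G T I \<longleftrightarrow> (\<forall>j\<in>occs G T - I. \<exists>i\<in>I. first_letter_less i j \<and>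
       indecomposable T (insert j I - {i}))"

text \<open>Anick chains: anick_chain G q m t L means m is an Anick q-chain with tail t,
and L is the set of occurrences (in m) of the relations linked in m.\<close>
inductive anick_chain :: "'a list set \<Rightarrow> nat \<Rightarrow> 'a list \<Rightarrow> 'a list \<Rightarrow> (nat \<times> nat) set \<Rightarrow> bool"
  for G :: "'a list set" where
  zero: "anick_chain G 0 [x] [x] {}"
| step: "\<lbrakk> anick_chain G q (n @ s) s L; t \<noteq> []; r \<in> G; suffix r (s @ t);
           length t < length r;
           occs G (s @ t) = {(length (s @ t) - length r, length r)} \<rbrakk>
         \<Longrightarrow> anick_chain G (Suc q) (n @ s @ t) t
               (insert (length (n @ s @ t) - length r, length r) L)"

end

theory Submission
  imports Defs
begin

definition en :: "nat \<times> nat \<Rightarrow> nat" where "en oc = fst oc + snd oc"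
definition lastend :: "(nat \<times> nat) set \<Rightarrow> nat" where
  "lastend I = (if I = {} then 1 else Max (en ` I))"
definition rest :: "(nat \<times> nat) set \<Rightarrow> (nat \<times> nat) set" where
  "rest I = {oc \<in> I. en oc < lastend I}"
definition tau :: "(nat \<times> nat) set \<Rightarrow> nat" where
  "tau I = (if I = {} then 0 else lastend (rest I))"

lemma occs_iff: "(p, l) \<in> occs G T \<longleftrightarrow> p + l \<le> length T \<and> take l (drop p T) \<in> G"
  by (simp add: occs_def)

lemma occs_en: "oc \<in> occs G T \<Longrightarrow> en oc \<le> length T"
  by (cases oc) (simp add: occs_def en_def)

lemma occs_finite: "finite (occs G T)"
proof -
  have "occs G T \<subseteq> {0..length T} \<times> {0..length T}" by (auto simp: occs_def)
  thus ?thesis by (rule finite_subset) auto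
qed

lemma occs_prefix: "oc \<in> occs G T \<Longrightarrow> oc \<in> occs G (T @ U)"
  by (cases oc) (auto simp: occs_def)

lemma occs_prefix_rev: "oc \<in> occs G (T @ U) \<Longrightarrow> en oc \<le> length T \<Longrightarrow> oc \<in> occs G T"
  by (cases oc) (auto simp: occs_def en_def)

lemma occs_take: "oc \<in> occs G T \<Longrightarrow> en oc \<le> n \<Longrightarrow> oc \<in> occs G (take n T)"
  by (cases oc) (auto simp: occs_def en_def take_drop min_def)

lemma occs_take_rev: "oc \<in> occs G (take n T) \<Longrightarrow> oc \<in> occs G T"
  by (cases oc) (auto simp: occs_def en_def take_drop min_def split: if_splits)

lemma occs_drop: "(p, l) \<in> occs G T \<Longrightarrow> b \<le> p \<Longrightarrow> (p - b, l) \<in> occs G (drop b T)"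
  by (auto simp: occs_def)

lemma occs_drop_rev: "(p, l) \<in> occs G (drop b T) \<Longrightarrow> b \<le> length T \<Longrightarrow> (p + b, l) \<in> occs G T"
  by (auto simp: occs_def add.commute)

locale anick_mono =
  fixes G :: "'a list set"
  assumes rel_len: "\<forall>w\<in>G. 2 \<le> length w"
      and minimal: "\<forall>u\<in>G. \<forall>w\<in>G. sublist u w \<longrightarrow> u = w"
begin

lemma occ_len: "oc \<in> occs G T \<Longrightarrow> 2 \<le> snd oc"
proof (cases oc)
  case (Pair p l)
  assume "oc \<in> occs G T"
  then have "p + l \<le> length T" "take l (drop p T) \<in> G" using Pair by (auto simp: occs_def)
  then have "2 \<le> length (take l (drop p T))" using rel_len by blast
  then show ?thesis using Pair by simp
qed

lemma no_contain:
  assumes a: "a \<in> occs G T" and b: "b \<in> occs G T" and "fst a \<le> fst b" and "en b \<le> en a"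
  shows "a = b"
proof -
  obtain pa la where A: "a = (pa, la)" by (cases a)
  obtain pb lb where B: "b = (pb, lb)" by (cases b)
  have ha: "pa + la \<le> length T" "take la (drop pa T) \<in> G" using a A by (auto simp: occs_def)
  have hb: "pb + lb \<le> length T" "take lb (drop pb T) \<in> G" using b B by (auto simp: occs_def)
  have le: "pa \<le> pb" "pb + lb \<le> pa + la" using assms A B by (auto simp: en_def)
  have eq: "take lb (drop pb T) = take lb (drop (pb - pa) (take la (drop pa T)))"
    using le by (simp add: drop_take take_take min_def)
  have "sublist (take lb (drop pb T)) (take la (drop pa T))"
    unfolding eq by (meson sublist_drop sublist_take sublist_order.order_trans)
  then have "take lb (drop pb T) = take la (drop pa T)" using minimal ha hb by blast
  moreover have "length (take lb (drop pb T)) = lb" using hb(1) by simp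
  moreover have "length (take la (drop pa T)) = la" using ha(1) by simp
  ultimately have "lb = la" by simp
  then show ?thesis using le A B by simp
qed

lemma en_lt_fst: "a \<in> occs G T \<Longrightarrow> b \<in> occs G T \<Longrightarrow> en a < en b \<Longrightarrow> fst a < fst b"
  using no_contain[of b T a] by force

lemma fst_lt_en: "a \<in> occs G T \<Longrightarrow> b \<in> occs G T \<Longrightarrow> fst a < fst b \<Longrightarrow> en a < en b"
  using no_contain[of a T b] by force

lemma en_eq: "a \<in> occs G T \<Longrightarrow> b \<in> occs G T \<Longrightarrow> en a = en b \<Longrightarrow> a = b"
  using no_contain[of a T b] no_contain[of b T a] by (cases "fst a \<le> fst b") auto

lemma fst_eq: "a \<in> occs G T \<Longrightarrow> b \<in> occs G T \<Longrightarrow> fst a = fst b \<Longrightarrow> a = b"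
  using no_contain[of a T b] no_contain[of b T a] by (cases "en a \<le> en b") auto


lemma lastend_ge: "finite I \<Longrightarrow> x \<in> I \<Longrightarrow> en x \<le> lastend I"
  by (auto simp: lastend_def)

lemma lastend_in: "finite I \<Longrightarrow> I \<noteq> {} \<Longrightarrow> \<exists>x\<in>I. en x = lastend I"
proof -
  assume f: "finite I" and ne: "I \<noteq> {}"
  have "Max (en ` I) \<in> en ` I" using Max_in[of "en ` I"] f ne by blast
  thus ?thesis using ne unfolding lastend_def by auto
qed

lemma lastend_le: "finite I \<Longrightarrow> I \<noteq> {} \<Longrightarrow> (\<And>x. x \<in> I \<Longrightarrow> en x \<le> c) \<Longrightarrow> lastend I \<le> c"
proof -
  assume f: "finite I" and ne: "I \<noteq> {}" and h: "\<And>x. x \<in> I \<Longrightarrow> en x \<le> c"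
  obtain x where "x \<in> I" "en x = lastend I" using lastend_in[OF f ne] by blast
  thus ?thesis using h by metis
qed

lemma lastend_eqI: "finite I \<Longrightarrow> x \<in> I \<Longrightarrow> (\<And>y. y \<in> I \<Longrightarrow> en y \<le> en x) \<Longrightarrow> lastend I = en x"
proof -
  assume f: "finite I" and x: "x \<in> I" and h: "\<And>y. y \<in> I \<Longrightarrow> en y \<le> en x"
  have "lastend I \<le> en x" using lastend_le[OF f _ h] x by blast
  moreover have "en x \<le> lastend I" using lastend_ge[OF f x] .
  ultimately show ?thesis by simp
qed

lemma rest_sub: "rest I \<subseteq> I" by (auto simp: rest_def)

lemma rest_en: "finite I \<Longrightarrow> x \<in> rest I \<Longrightarrow> en x \<le> tau I"
proof -
  assume f: "finite I" and x: "x \<in> rest I"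
  have fr: "finite (rest I)" by (rule finite_subset[OF rest_sub f])
  have "I \<noteq> {}" using x rest_sub by blast
  then have "tau I = lastend (rest I)" by (simp add: tau_def)
  thus ?thesis using lastend_ge[OF fr x] by simp
qed

definition good :: "'a list \<Rightarrow> (nat \<times> nat) set \<Rightarrow> bool" where
  "good T I \<longleftrightarrow> I \<subseteq> occs G T \<and> indecomposable T I \<and> cond_I T I \<and> cond_II G T I"

lemma en_ge2: "oc \<in> occs G T \<Longrightarrow> 2 \<le> en oc"
  using occ_len[of oc T] by (simp add: en_def)

lemma tau_ge1: "finite I \<Longrightarrow> I \<noteq> {} \<Longrightarrow> I \<subseteq> occs G T \<Longrightarrow> 1 \<le> tau I"
proof -
  assume f: "finite I" and ne: "I \<noteq> {}" and sub: "I \<subseteq> occs G T"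
  show ?thesis
  proof (cases "rest I = {}")
    case True thus ?thesis using ne by (simp add: tau_def lastend_def)
  next
    case False
    then obtain x where x: "x \<in> rest I" by auto
    have "finite (rest I)" using f rest_sub finite_subset[OF rest_sub f] by blast
    then have "en x \<le> lastend (rest I)" using lastend_ge x by blast
    moreover have "2 \<le> en x" using x sub rest_sub en_ge2 by blast
    ultimately show ?thesis using ne by (simp add: tau_def)
  qed
qed

lemma tau_le: "finite I \<Longrightarrow> I \<subseteq> occs G T \<Longrightarrow> tau I \<le> lastend I"
proof -
  assume f: "finite I" and sub: "I \<subseteq> occs G T"
  show ?thesis
  proof (cases "I = {}")
    case True thus ?thesis by (simp add: tau_def)
  next
    case ne: False
    show ?thesis
    proof (cases "rest I = {}")
      case True
      obtain x where "x \<in> I" using ne by auto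
      then have "2 \<le> en x" "en x \<le> lastend I" using sub en_ge2 lastend_ge[OF f] by blast+
      thus ?thesis using True ne by (simp add: tau_def lastend_def)
    next
      case False
      have "finite (rest I)" using f rest_sub finite_subset[OF rest_sub f] by blast
      then have "lastend (rest I) \<le> lastend I"
        using False by (intro lastend_le) (auto simp: rest_def)
      thus ?thesis using ne by (simp add: tau_def)
    qed
  qed
qed


lemma occs_single: "length T \<le> 1 \<Longrightarrow> occs G T = {}"
  using occs_en en_ge2 by (meson ex_in_conv le_trans not_numeral_le_zero numeral_le_one_iff semiring_norm(69))

lemma chain_good:
  "anick_chain G q m t L \<Longrightarrow>
     good m L \<and> finite L \<and> card L = q \<and> t = drop (tau L) m \<and> length m = lastend L"
proof (induction rule: anick_chain.induct)
  case (zero x)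
  have "occs G [x] = {}" by (rule occs_single) simp
  then show ?case
    by (simp add: good_def indecomposable_def cond_I_def cond_II_def tau_def lastend_def)
next
  case (step q n s L t r)
  define m' where "m' = n @ s"
  define m where "m = n @ s @ t"
  define o1 where "o1 = (length m - length r, length r)"
  have gd: "good m' L" and fin: "finite L" and cardL: "card L = q"
    and sd: "s = drop (tau L) m'" and lm': "length m' = lastend L"
    using step.IH by (auto simp: m'_def)
  have Lsub: "L \<subseteq> occs G m'" using gd by (simp add: good_def)
  have ind': "indecomposable m' L" and cI': "cond_I m' L" and cII': "cond_II G m' L"
    using gd by (auto simp: good_def)
  have taule: "tau L \<le> length m'" using tau_le[OF fin Lsub] lm' by simp
  have ln: "length n = tau L"
  proof -
    have "length s = length m' - tau L" using sd by simp
    thus ?thesis using taule by (simp add: m'_def)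
  qed
  have mm: "m = m' @ t" by (simp add: m_def m'_def)
  have rG: "r \<in> G" and rs: "suffix r (s @ t)" and tr: "length t < length r" and tne: "t \<noteq> []"
    and occst: "occs G (s @ t) = {(length (s @ t) - length r, length r)}" using step by auto
  have r2: "2 \<le> length r" using rel_len rG by blast
  have lrs: "length r \<le> length (s @ t)" using rs by (auto simp: suffix_def dest: arg_cong[where f=length])
  have fo_ge: "tau L \<le> fst o1" using lrs ln by (simp add: o1_def m_def)
  have fo_lt: "fst o1 < length m'" using tr lrs by (simp add: o1_def mm m'_def)
  have eno: "en o1 = length m" using lrs by (simp add: o1_def en_def m_def)
  have rsm: "suffix r m" using rs by (simp add: m_def suffix_appendI)
  have o1occ: "o1 \<in> occs G m"
  proof -
    obtain zs where "m = zs @ r" using rsm by (auto simp: suffix_def)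
    then have "drop (length m - length r) m = r" by simp
    moreover have "length r \<le> length m" using lrs by (simp add: m_def)
    ultimately show ?thesis using rG by (simp add: o1_def occs_def)
  qed
  have Lsubm: "L \<subseteq> occs G m" using Lsub occs_prefix mm by blast
  have enL: "\<And>x. x \<in> L \<Longrightarrow> en x \<le> length m'" using Lsub occs_en by blast
  have lmgt: "length m' < length m" using tne mm by simp
  have o1L: "o1 \<notin> L" using enL eno lmgt by fastforce
  have finI: "finite (insert o1 L)" using fin by simp
  have cardI: "card (insert o1 L) = Suc q" using fin o1L cardL by simp
  have lastI: "lastend (insert o1 L) = length m"
  proof -
    have "lastend (insert o1 L) = en o1"
      by (rule lastend_eqI[OF finI]) (use enL eno lmgt in fastforce)+
    thus ?thesis using eno by simp
  qed
  have restI: "rest (insert o1 L) = L"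
  proof -
    have "\<And>x. x \<in> L \<Longrightarrow> en x < length m" using enL lmgt le_less_trans by blast
    thus ?thesis using eno lastI unfolding rest_def by auto
  qed
  have tauI: "tau (insert o1 L) = length m'" using restI lm' by (simp add: tau_def)
  have tdrop: "t = drop (tau (insert o1 L)) m" using tauI mm by simp
  have m2: "2 \<le> length m" using eno en_ge2[OF o1occ] by simp
  have cov_o: "\<And>k. fst o1 \<le> k \<Longrightarrow> k + 1 < length m \<Longrightarrow> internal_edge k o1"
    using eno by (simp add: internal_edge_def en_def)
  have indI: "indecomposable m (insert o1 L)"
    unfolding indecomposable_def
  proof (intro allI impI)
    fix k assume k: "k + 1 < length m"
    show "\<exists>oc\<in>insert o1 L. internal_edge k oc"
    proof (cases "k + 1 < length m'")
      case True
      then obtain oc where "oc \<in> L" "internal_edge k oc" using ind' by (auto simp: indecomposable_def)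
      thus ?thesis by blast
    next
      case False
      then have "fst o1 \<le> k" using fo_lt by simp
      thus ?thesis using cov_o k by blast
    qed
  qed
  have cIm: "cond_I m (insert o1 L)"
    unfolding cond_I_def indecomposable_def
  proof (intro ballI notI)
    fix j assume j: "j \<in> insert o1 L"
      and H: "\<forall>k. k + 1 < length m \<longrightarrow> (\<exists>oc\<in>insert o1 L - {j}. internal_edge k oc)"
    show False
    proof (cases "j = o1")
      case True
      have v: "length m - 2 + 1 < length m" using m2 by simp
      obtain oc where oc: "oc \<in> insert o1 L - {j}" "internal_edge (length m - 2) oc"
        using H v by blast
      then have "oc \<in> L" using True by auto
      then have "en oc \<le> length m'" by (rule enL)
      thus False using oc(2) lmgt m2 unfolding internal_edge_def en_def by linarith
    next
      case False
      then have jL: "j \<in> L" using j by simp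
      obtain k where k: "k + 1 < length m'" and unc: "\<forall>oc\<in>L - {j}. \<not> internal_edge k oc"
        using cI' jL by (auto simp: cond_I_def indecomposable_def)
      obtain oc where "oc \<in> L" "internal_edge k oc" using ind' k by (auto simp: indecomposable_def)
      then have "oc = j" using unc by blast
      with \<open>internal_edge k oc\<close> have jk: "internal_edge k j" by simp
      show False
      proof (cases "k < fst o1")
        case True
        have kv: "k + 1 < length m" using k lmgt by simp
        obtain oc where oc: "oc \<in> insert o1 L - {j}" "internal_edge k oc" using H kv by blast
        show False using oc unc True by (auto simp: internal_edge_def)
      next
        case False
        then have "tau L \<le> k" using fo_ge by simp
        then have enj: "tau L + 2 \<le> en j" using jk by (simp add: internal_edge_def en_def)
        have Lne: "L \<noteq> {}" using jL by blast
        have jnr: "j \<notin> rest L"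
        proof
          assume "j \<in> rest L"
          then have "en j \<le> tau L" by (rule rest_en[OF fin])
          thus False using enj by simp
        qed
        have ej: "en j = length m'" using jnr jL lm' lastend_ge[OF fin jL] by (simp add: rest_def)
        have t1: "1 \<le> tau L" using tau_ge1[OF fin Lne Lsub] .
        define k0 where "k0 = tau L - 1"
        have k0v: "k0 + 1 < length m" using t1 fo_ge fo_lt lmgt by (simp add: k0_def)
        obtain oc where oc: "oc \<in> insert o1 L - {j}" "internal_edge k0 oc" using H k0v by blast
        show False
        proof (cases "oc = o1")
          case True thus False using oc fo_ge t1 unfolding internal_edge_def k0_def by simp linarith
        next
          case False
          then have ocL: "oc \<in> L" "oc \<noteq> j" using oc by auto
          have "oc \<in> occs G m'" "j \<in> occs G m'" using Lsub ocL jL by auto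
          then have "en oc \<noteq> en j" using en_eq[of oc m' j] ocL(2) by blast
          then have "oc \<in> rest L" using ocL lastend_ge[OF fin ocL(1)] ej lm' by (simp add: rest_def)
          then have "en oc \<le> tau L" using rest_en[OF fin] by blast
          thus False using oc(2) t1 unfolding internal_edge_def en_def k0_def by linarith
        qed
      qed
    qed
  qed
  have cIIm: "cond_II G m (insert o1 L)"
    unfolding cond_II_def
  proof (intro ballI)
    fix j assume j: "j \<in> occs G m - insert o1 L"
    show "\<exists>i\<in>insert o1 L. first_letter_less i j \<and> indecomposable m (insert j (insert o1 L) - {i})"
    proof (cases "en j \<le> length m'")
      case True
      have "j \<in> occs G m'" using occs_prefix_rev[of j G m' t] j True mm by simp
      then have jm': "j \<in> occs G m' - L" using j by simp
      obtain i where i: "i \<in> L" "first_letter_less i j" "indecomposable m' (insert j L - {i})"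
        using cII' jm' unfolding cond_II_def by blast
      have "indecomposable m (insert j (insert o1 L) - {i})"
        unfolding indecomposable_def
      proof (intro allI impI)
        fix k assume k: "k + 1 < length m"
        show "\<exists>oc\<in>insert j (insert o1 L) - {i}. internal_edge k oc"
        proof (cases "k + 1 < length m'")
          case True
          then obtain oc where "oc \<in> insert j L - {i}" "internal_edge k oc" using i(3) True unfolding indecomposable_def by blast
          thus ?thesis by blast
        next
          case False
          then have "internal_edge k o1" using fo_lt cov_o k by simp
          moreover have "o1 \<noteq> i" using i(1) o1L by blast
          ultimately show ?thesis by blast
        qed
      qed
      thus ?thesis using i by blast
    next
      case False
      then have ejg: "length m' < en j" by simp
      have jocc: "j \<in> occs G m" and jn: "j \<noteq> o1" "j \<notin> L" using j by auto
      have fj: "fst j < tau L"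
      proof (rule ccontr)
        assume "\<not> fst j < tau L"
        then have le: "tau L \<le> fst j" by simp
        have dm: "drop (tau L) m = s @ t" using ln by (simp add: m_def)
        have "(fst j - tau L, snd j) \<in> occs G (drop (tau L) m)"
          using occs_drop[of "fst j" "snd j" G m "tau L"] jocc le by simp
        then have "(fst j - tau L, snd j) = (length (s @ t) - length r, length r)"
          using occst dm by simp
        then have "j = o1" using le ln lrs by (cases j) (auto simp: o1_def m_def)
        thus False using jn by simp
      qed
      have Lne: "L \<noteq> {}" using fj by (auto simp: tau_def)
      obtain l where lL: "l \<in> L" and el: "en l = length m'" using lastend_in[OF fin Lne] lm' by auto
      have locc: "l \<in> occs G m" using lL Lsubm by blast
      have fl: "fst l < fst j" using en_lt_fst[OF locc jocc] el ejg by simp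
      have jl: "j \<noteq> l" using jn lL by blast
      have "indecomposable m (insert j (insert o1 L) - {l})"
        unfolding indecomposable_def
      proof (intro allI impI)
        fix k assume k: "k + 1 < length m"
        show "\<exists>oc\<in>insert j (insert o1 L) - {l}. internal_edge k oc"
        proof (cases "fst o1 \<le> k")
          case True
          moreover have "o1 \<noteq> l" using lL o1L by blast
          ultimately show ?thesis using cov_o k by blast
        next
          case ko: False
          show ?thesis
          proof (cases "tau L \<le> k + 1")
            case True
            have "internal_edge k j" using True ko fj fo_lt ejg
              by (simp add: internal_edge_def en_def)
            thus ?thesis using jl by blast
          next
            case False
            then have kt: "k + 1 < tau L" by simp
            have rne: "rest L \<noteq> {}" using kt Lne by (auto simp: tau_def lastend_def)
            have fr: "finite (rest L)" by (rule finite_subset[OF rest_sub fin])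
            obtain l' where l'r: "l' \<in> rest L" and el': "en l' = tau L"
              using lastend_in[OF fr rne] Lne by (auto simp: tau_def)
            have l'L: "l' \<in> L" using l'r rest_sub by blast
            have "k + 1 < length m'" using kt taule by simp
            then obtain oc where oc: "oc \<in> L" "internal_edge k oc"
              using ind' unfolding indecomposable_def by blast
            show ?thesis
            proof (cases "oc = l")
              case False thus ?thesis using oc by blast
            next
              case True
              have "en l' < en l" using l'r el lm' by (simp add: rest_def)
              then have "fst l' < fst l" using en_lt_fst Lsub l'L lL by blast
              then have "internal_edge k l'" using oc True el' kt by (simp add: internal_edge_def en_def)
              moreover have "l' \<noteq> l" using \<open>en l' < en l\<close> by blast
              ultimately show ?thesis using l'L by blast
            qed
          qed
        qed
      qed
      thus ?thesis using lL fl by (auto simp: first_letter_less_def)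
    qed
  qed
  have "good m (insert o1 L)" using Lsubm o1occ indI cIm cIIm by (simp add: good_def)
  moreover have "n @ s @ t = m" by (simp add: m_def)
  moreover have "(length m - length r, length r) = o1" by (simp add: o1_def)
  ultimately show ?case using finI cardI tdrop lastI by metis
qed


lemma edge_cov: "indecomposable T I \<Longrightarrow> k + 1 < length T \<Longrightarrow> \<exists>oc\<in>I. internal_edge k oc"
  unfolding indecomposable_def by blast

lemma good_chain:
  "T \<noteq> [] \<Longrightarrow> good T I \<Longrightarrow> anick_chain G (card I) T (drop (tau I) T) I"
proof (induction "card I" arbitrary: T I rule: less_induct)
  case less
  have sub: "I \<subseteq> occs G T" and ind: "indecomposable T I" and cI: "cond_I T I"
    and cII: "cond_II G T I" using less.prems by (auto simp: good_def)
  have fin: "finite I" using finite_subset[OF sub occs_finite] .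
  show ?case
  proof (cases "I = {}")
    case True
    have "length T \<le> 1"
    proof (rule ccontr)
      assume "\<not> length T \<le> 1"
      then have "0 + 1 < length T" by simp
      then show False using edge_cov[OF ind] True by blast
    qed
    then obtain x where Tx: "T = [x]" using less.prems(1)
      by (cases T) auto
    show ?thesis using True Tx by (simp add: tau_def anick_chain.zero)
  next
    case Ine: False
    have enT: "\<And>x. x \<in> I \<Longrightarrow> en x \<le> length T" using sub occs_en by blast
    obtain x0 where "x0 \<in> I" using Ine by blast
    then have T2: "2 \<le> length T" using enT en_ge2 sub by (meson le_trans subsetD)
    have v0: "length T - 2 + 1 < length T" using T2 by simp
    obtain o1 where o1I: "o1 \<in> I" and o1e: "internal_edge (length T - 2) o1"
      using edge_cov[OF ind v0] by blast
    have o1occ: "o1 \<in> occs G T" using o1I sub by blast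
    have eno: "en o1 = length T" using o1e enT[OF o1I] T2
      unfolding internal_edge_def en_def by linarith
    define I' where "I' = I - {o1}"
    have finI': "finite I'" using fin by (simp add: I'_def)
    have I'sub: "I' \<subseteq> occs G T" using sub by (auto simp: I'_def)
    have II': "I = insert o1 I'" using o1I by (auto simp: I'_def)
    have o1nI': "o1 \<notin> I'" by (simp add: I'_def)
    have enI': "\<And>x. x \<in> I' \<Longrightarrow> en x < length T"
    proof -
      fix x assume x: "x \<in> I'"
      have "en x \<noteq> en o1"
      proof
        assume "en x = en o1"
        then have "x = o1" using en_eq[of x T o1] x I'sub o1occ by blast
        thus False using x o1nI' by simp
      qed
      thus "en x < length T" using enT[of x] x eno by (auto simp: I'_def)
    qed
    have lastI: "lastend I = length T"
      using lastend_eqI[OF fin o1I] enT eno by simp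
    have restI: "rest I = I'"
      using enI' eno lastI by (auto simp: rest_def I'_def)
    have tauI: "tau I = lastend I'" using restI Ine by (simp add: tau_def)
    have F1: "lastend I' < length T"
    proof (cases "I' = {}")
      case True thus ?thesis using T2 by (simp add: lastend_def)
    next
      case False
      then obtain l where "l \<in> I'" "en l = lastend I'" using lastend_in[OF finI'] by blast
      thus ?thesis using enI' by fastforce
    qed
    define b where "b = tau I'"
    define R where "R = rest I'"
    have finR: "finite R" unfolding R_def by (rule finite_subset[OF rest_sub finI'])
    have RI': "R \<subseteq> I'" by (simp add: R_def rest_sub)
    have enR: "\<And>x. x \<in> R \<Longrightarrow> en x \<le> b" unfolding R_def b_def by (rule rest_en[OF finI'])
    have F2: "fst o1 < lastend I'"
    proof (cases "I' = {}")
      case True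
      have "0 + 1 < length T" using T2 by simp
      then obtain oc where "oc \<in> I" "internal_edge 0 oc" using edge_cov[OF ind] by blast
      then have "oc = o1" using True II' by simp
      then have "fst o1 = 0" using \<open>internal_edge 0 oc\<close> by (simp add: internal_edge_def)
      thus ?thesis using True by (simp add: lastend_def)
    next
      case False
      then obtain l where lI': "l \<in> I'" and el: "en l = lastend I'" using lastend_in[OF finI'] by blast
      have l2: "2 \<le> en l" using lI' I'sub en_ge2 by blast
      have "en l - 1 + 1 < length T" using enI'[OF lI'] l2 by simp
      then obtain x where xI: "x \<in> I" and xe: "internal_edge (en l - 1) x" using edge_cov[OF ind] by blast
      have "en l < en x" using xe l2 unfolding internal_edge_def en_def by linarith
      then have "x \<notin> I'" using lastend_ge[OF finI', of x] el by fastforce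
      then have "x = o1" using xI II' by blast
      then have "fst o1 \<le> en l - 1" using xe unfolding internal_edge_def by simp
      thus ?thesis using el l2 by linarith
    qed
    have lmax: "\<And>l x. l \<in> I' \<Longrightarrow> en l = lastend I' \<Longrightarrow> x \<in> I' \<Longrightarrow> x \<notin> R \<Longrightarrow> x = l"
    proof -
      fix l x assume lI': "l \<in> I'" and el: "en l = lastend I'" and xI': "x \<in> I'" and xR: "x \<notin> R"
      have "en x = lastend I'" using xR xI' lastend_ge[OF finI' xI'] by (simp add: R_def rest_def)
      thus "x = l" using en_eq[of x T l] xI' lI' I'sub el by auto
    qed
    have F3: "b \<le> fst o1"
    proof (cases "I' = {}")
      case True thus ?thesis by (simp add: b_def tau_def)
    next
      case I'ne: False
      obtain l where lI': "l \<in> I'" and el: "en l = lastend I'" using lastend_in[OF finI' I'ne] by blast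
      have locc: "l \<in> occs G T" using lI' I'sub by blast
      have lo: "l \<noteq> o1" using lI' o1nI' by blast
      have elo: "en l < en o1" using enI'[OF lI'] eno by simp
      show ?thesis
      proof (cases "R = {}")
        case True
        then have b1: "b = 1" using I'ne by (simp add: b_def tau_def R_def lastend_def)
        have "fst o1 \<noteq> 0"
        proof
          assume "fst o1 = 0"
          then have "o1 = l" using no_contain[OF o1occ locc] elo by simp
          thus False using lo by simp
        qed
        thus ?thesis using b1 by simp
      next
        case Rne: False
        obtain l' where l'R: "l' \<in> R" and el': "en l' = b"
          using lastend_in[OF finR Rne] I'ne by (auto simp: b_def tau_def R_def)
        have l'I': "l' \<in> I'" using l'R RI' by blast
        have l'occ: "l' \<in> occs G T" using l'I' I'sub by blast
        have ell': "en l' < en l" using l'R el by (simp add: R_def rest_def)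
        have fl': "fst l' < fst l" using en_lt_fst[OF l'occ locc ell'] .
        show ?thesis
        proof (rule ccontr)
          assume "\<not> b \<le> fst o1"
          then have ob: "fst o1 < en l'" using el' by simp
          have "indecomposable T (I - {l})"
            unfolding indecomposable_def
          proof (intro allI impI)
            fix k assume k: "k + 1 < length T"
            obtain x where xI: "x \<in> I" and xe: "internal_edge k x" using edge_cov[OF ind k] by blast
            show "\<exists>oc\<in>I - {l}. internal_edge k oc"
            proof (cases "x = l")
              case False thus ?thesis using xI xe by blast
            next
              case True
              with xe have xe: "internal_edge k l" by simp
              show ?thesis
              proof (cases "fst o1 \<le> k")
                case True
                have "internal_edge k o1" using True xe elo
                  unfolding internal_edge_def en_def by linarith
                thus ?thesis using o1I lo by blast
              next
                case False
                have "internal_edge k l'" using False xe fl' ob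
                  unfolding internal_edge_def en_def by linarith
                moreover have "l' \<noteq> l" using ell' by blast
                ultimately show ?thesis using l'I' II' by blast
              qed
            qed
          qed
          moreover have "l \<in> I" using lI' II' by blast
          ultimately show False using cI by (simp add: cond_I_def)
        qed
      qed
    qed
    have b1: "I' \<noteq> {} \<Longrightarrow> 1 \<le> b" using tau_ge1[OF finI' _ I'sub] by (simp add: b_def)
    have F5: "\<And>l. l \<in> I' \<Longrightarrow> en l = lastend I' \<Longrightarrow> fst l < b"
    proof -
      fix l assume lI': "l \<in> I'" and el: "en l = lastend I'"
      have bb: "1 \<le> b" using b1 lI' by blast
      have "b - 1 + 1 < length T" using bb F3 F2 F1 by simp
      then obtain x where xI: "x \<in> I" and xe: "internal_edge (b - 1) x" using edge_cov[OF ind] by blast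
      have "fst x < b" using xe bb unfolding internal_edge_def by linarith
      then have "x \<noteq> o1" using F3 by auto
      then have xI': "x \<in> I'" using xI II' by blast
      have "x \<notin> R" using enR xe bb unfolding internal_edge_def en_def by fastforce
      then have "x = l" using lmax[OF lI' el xI'] by simp
      with xe have "internal_edge (b - 1) l" by simp
      thus "fst l < b" using bb unfolding internal_edge_def by linarith
    qed
    have F4: "occs G (drop b T) = {(length T - b - snd o1, snd o1)}"
    proof (intro equalityI subsetI)
      fix y assume "y \<in> {(length T - b - snd o1, snd o1)}"
      moreover have "(fst o1 - b, snd o1) \<in> occs G (drop b T)"
        using occs_drop[of "fst o1" "snd o1" G T b] o1occ F3 by simp
      moreover have "fst o1 - b = length T - b - snd o1" using eno by (simp add: en_def)
      ultimately show "y \<in> occs G (drop b T)" by simp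
    next
      fix y assume y: "y \<in> occs G (drop b T)"
      obtain p l0 where yp: "y = (p, l0)" by (cases y)
      have bT: "b \<le> length T" using F3 F2 F1 by simp
      define j where "j = (p + b, l0)"
      have jocc: "j \<in> occs G T" using occs_drop_rev[of p l0 G b T] y yp bT by (simp add: j_def)
      have fj: "b \<le> fst j" by (simp add: j_def)
      have "j = o1"
      proof (rule ccontr)
        assume jo: "j \<noteq> o1"
        have "en j \<noteq> en o1" using en_eq[OF jocc o1occ] jo by blast
        then have "en j < en o1" using occs_en[OF jocc] eno by simp
        then have fjo: "fst j < fst o1" using en_lt_fst[OF jocc o1occ] by blast
        have sj: "2 \<le> snd j" using occ_len[OF jocc] .
        show False
        proof (cases "j \<in> I")
          case True
          then have jI': "j \<in> I'" using jo II' by blast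
          have I'ne: "I' \<noteq> {}" using jI' by blast
          obtain l where lI': "l \<in> I'" and el: "en l = lastend I'" using lastend_in[OF finI' I'ne] by blast
          show False
          proof (cases "j \<in> R")
            case True
            then have "en j \<le> b" by (rule enR)
            thus False using fj sj by (simp add: en_def)
          next
            case False
            then have "j = l" using lmax[OF lI' el jI'] by simp
            thus False using F5[OF lI' el] fj by simp
          qed
        next
          case False
          then have "j \<in> occs G T - I" using jocc by simp
          then obtain i where iI: "i \<in> I" and fij: "first_letter_less i j"
            and indi: "indecomposable T (insert j I - {i})" using cII unfolding cond_II_def by blast
          have io: "i \<noteq> o1" using fij fjo by (auto simp: first_letter_less_def)
          then have iI': "i \<in> I'" using iI II' by blast
          have I'ne: "I' \<noteq> {}" using iI' by blast
          obtain l where lI': "l \<in> I'" and el: "en l = lastend I'" using lastend_in[OF finI' I'ne] by blast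
          show False
          proof (cases "i \<in> R")
            case True
            obtain k where kv: "k + 1 < length T" and unc: "\<forall>oc\<in>I - {i}. \<not> internal_edge k oc"
              using cI iI unfolding cond_I_def indecomposable_def by blast
            obtain x where "x \<in> I" "internal_edge k x" using edge_cov[OF ind kv] by blast
            then have "x = i" using unc by blast
            with \<open>internal_edge k x\<close> have ik: "internal_edge k i" by simp
            have "en i \<le> b" using enR True by blast
            then have kb: "k < b" using ik unfolding internal_edge_def en_def by linarith
            obtain y where yI: "y \<in> insert j I - {i}" and ye: "internal_edge k y" using edge_cov[OF indi kv] by blast
            show False
            proof (cases "y = j")
              case True with ye have "internal_edge k j" by simp
              thus False using fj kb unfolding internal_edge_def by linarith
            next
              case False thus False using yI ye unc by blast
            qed
          next
            case False
            then have il: "i = l" using lmax[OF lI' el iI'] by simp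
            have bb: "1 \<le> b" using b1 I'ne by blast
            have "b - 1 + 1 < length T" using bb F3 F2 F1 by simp
            then obtain y where yI: "y \<in> insert j I - {i}" and ye: "internal_edge (b - 1) y"
              using edge_cov[OF indi] by blast
            show False
            proof (cases "y = j")
              case True with ye have "internal_edge (b - 1) j" by simp
              thus False using fj bb unfolding internal_edge_def by linarith
            next
              case yj: False
              show False
              proof (cases "y = o1")
                case True with ye have "internal_edge (b - 1) o1" by simp
                thus False using F3 bb unfolding internal_edge_def by linarith
              next
                case False
                then have yI': "y \<in> I'" "y \<noteq> l" using yI yj II' il by auto
                then have "y \<in> R" using lmax[OF lI' el] by blast
                then have "en y \<le> b" by (rule enR)
                thus False using ye bb unfolding internal_edge_def en_def by linarith
              qed
            qed
          qed
        qed
      qed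
      then have "(p, l0) = (fst o1 - b, snd o1)" by (auto simp: j_def)
      moreover have "fst o1 - b = length T - b - snd o1" using eno by (simp add: en_def)
      ultimately show "y \<in> {(length T - b - snd o1, snd o1)}" using yp by simp
    qed
    define m' where "m' = take (lastend I') T"
    have lm': "length m' = lastend I'" using F1 by (simp add: m'_def)
    have m'T: "\<And>x. x \<in> occs G m' \<Longrightarrow> x \<in> occs G T"
      unfolding m'_def by (rule occs_take_rev)
    have F6: "good m' I'"
    proof -
      have s': "I' \<subseteq> occs G m'"
      proof
        fix x assume x: "x \<in> I'"
        have "en x \<le> lastend I'" using lastend_ge[OF finI' x] .
        thus "x \<in> occs G m'" unfolding m'_def using occs_take x I'sub by blast
      qed
      have i': "indecomposable m' I'"
        unfolding indecomposable_def
      proof (intro allI impI)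
        fix k assume k: "k + 1 < length m'"
        have I'ne: "I' \<noteq> {}" using k lm' by (auto simp: lastend_def)
        obtain l where lI': "l \<in> I'" and el: "en l = lastend I'" using lastend_in[OF finI' I'ne] by blast
        have kT: "k + 1 < length T" using k lm' F1 by simp
        obtain x where xI: "x \<in> I" and xe: "internal_edge k x" using edge_cov[OF ind kT] by blast
        show "\<exists>oc\<in>I'. internal_edge k oc"
        proof (cases "x = o1")
          case False thus ?thesis using xI xe II' by blast
        next
          case True
          with xe have xe: "internal_edge k o1" by simp
          have "en l < en o1" using enI'[OF lI'] eno by simp
          then have "fst l < fst o1" using en_lt_fst[OF _ o1occ] lI' I'sub by blast
          then have "internal_edge k l" using xe k lm' el unfolding internal_edge_def en_def by linarith
          thus ?thesis using lI' by blast
        qed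
      qed
      have c1: "cond_I m' I'"
        unfolding cond_I_def
      proof
        fix j assume jI': "j \<in> I'"
        have jI: "j \<in> I" using jI' II' by blast
        obtain k where kv: "k + 1 < length T" and unc: "\<forall>oc\<in>I - {j}. \<not> internal_edge k oc"
          using cI jI unfolding cond_I_def indecomposable_def by blast
        obtain x where "x \<in> I" "internal_edge k x" using edge_cov[OF ind kv] by blast
        then have "x = j" using unc by blast
        with \<open>internal_edge k x\<close> have jk: "internal_edge k j" by simp
        have "en j \<le> lastend I'" using lastend_ge[OF finI' jI'] .
        then have km: "k + 1 < length m'" using jk lm' unfolding internal_edge_def en_def by linarith
        show "\<not> indecomposable m' (I' - {j})"
        proof
          assume "indecomposable m' (I' - {j})"
          then obtain y where "y \<in> I' - {j}" "internal_edge k y" using edge_cov km by blast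
          thus False using unc II' by blast
        qed
      qed
      have c2: "cond_II G m' I'"
        unfolding cond_II_def
      proof
        fix j assume j: "j \<in> occs G m' - I'"
        have jocc: "j \<in> occs G T" using j m'T by blast
        have ej: "en j \<le> length m'" using j occs_en by blast
        have ejo: "en j < en o1" using ej lm' F1 eno by simp
        have jI: "j \<notin> I" using j II' ejo by auto
        obtain i where iI: "i \<in> I" and fij: "first_letter_less i j"
          and indi: "indecomposable T (insert j I - {i})" using cII jocc jI unfolding cond_II_def by blast
        have fjo: "fst j < fst o1" using en_lt_fst[OF jocc o1occ ejo] .
        have io: "i \<noteq> o1" using fij fjo by (auto simp: first_letter_less_def)
        then have iI': "i \<in> I'" using iI II' by blast
        have I'ne: "I' \<noteq> {}" using iI' by blast
        obtain l where lI': "l \<in> I'" and el: "en l = lastend I'" using lastend_in[OF finI' I'ne] by blast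
        have locc: "l \<in> occs G T" using lI' I'sub by blast
        have il: "i \<noteq> l"
        proof
          assume "i = l"
          then have "fst l \<le> fst j" using fij by (simp add: first_letter_less_def)
          then have "l = j" using no_contain[OF locc jocc] ej lm' el by simp
          thus False using j lI' by simp
        qed
        have "indecomposable m' (insert j I' - {i})"
          unfolding indecomposable_def
        proof (intro allI impI)
          fix k assume k: "k + 1 < length m'"
          have kT: "k + 1 < length T" using k lm' F1 by simp
          obtain y where yI: "y \<in> insert j I - {i}" and ye: "internal_edge k y" using edge_cov[OF indi kT] by blast
          show "\<exists>oc\<in>insert j I' - {i}. internal_edge k oc"
          proof (cases "y = o1")
            case False thus ?thesis using yI ye II' by blast
          next
            case True
            with ye have ye: "internal_edge k o1" by simp
            have "en l < en o1" using enI'[OF lI'] eno by simp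
            then have "fst l < fst o1" using en_lt_fst[OF locc o1occ] by blast
            then have "internal_edge k l" using ye k lm' el unfolding internal_edge_def en_def by linarith
            thus ?thesis using lI' il by blast
          qed
        qed
        thus "\<exists>i\<in>I'. first_letter_less i j \<and> indecomposable m' (insert j I' - {i})" using iI' fij by blast
      qed
      show ?thesis using s' i' c1 c2 by (simp add: good_def)
    qed
    have le1: "1 \<le> lastend I'"
    proof (cases "I' = {}")
      case True thus ?thesis by (simp add: lastend_def)
    next
      case False
      then obtain l where "l \<in> I'" "en l = lastend I'" using lastend_in[OF finI'] by blast
      thus ?thesis using en_ge2 I'sub by fastforce
    qed
    have m'ne: "m' \<noteq> []" using lm' le1 by auto
    have cardlt: "card I' < card I" unfolding I'_def by (rule card_Diff1_less[OF fin o1I])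
    have IH: "anick_chain G (card I') m' (drop b m') I'"
      using less.hyps[OF cardlt m'ne F6] by (simp add: b_def)
    define n where "n = take b m'"
    define s where "s = drop b m'"
    define t where "t = drop (lastend I') T"
    define r where "r = drop (fst o1) T"
    have bL: "b \<le> lastend I'" using F3 F2 by simp
    have ns: "n @ s = m'" by (simp add: n_def s_def)
    have ch: "anick_chain G (card I') (n @ s) s I'" using IH ns by (simp add: s_def)
    have tne: "t \<noteq> []" using F1 by (simp add: t_def)
    have lr: "length r = snd o1" using eno by (simp add: r_def en_def)
    have rG: "r \<in> G"
    proof -
      have "take (snd o1) (drop (fst o1) T) \<in> G" using o1occ by (cases o1) (simp add: occs_def)
      moreover have "take (snd o1) (drop (fst o1) T) = drop (fst o1) T" using lr by (simp add: r_def)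
      ultimately show ?thesis by (simp add: r_def)
    qed
    have st: "s @ t = drop b T"
    proof -
      have "drop b (take (lastend I') T @ drop (lastend I') T) = s @ t"
        unfolding drop_append using bL F1 by (simp add: s_def t_def m'_def)
      thus ?thesis by simp
    qed
    have rsuf: "suffix r (s @ t)"
    proof -
      have "r = drop (fst o1 - b) (drop b T)" using F3 by (simp add: r_def)
      thus ?thesis using st suffix_drop by metis
    qed
    have tr: "length t < length r" using F2 F1 by (simp add: t_def r_def)
    have oc: "occs G (s @ t) = {(length (s @ t) - length r, length r)}"
      using F4 st lr by simp
    have step: "anick_chain G (Suc (card I')) (n @ s @ t) t
                  (insert (length (n @ s @ t) - length r, length r) I')"
      by (rule anick_chain.step[OF ch tne rG rsuf tr oc])
    have nst: "n @ s @ t = T" unfolding append_assoc[symmetric] ns by (simp add: m'_def t_def)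
    have oo: "(length T - length r, length r) = o1" using lr eno by (cases o1) (simp add: en_def)
    have cI': "Suc (card I') = card I" using II' o1nI' finI' by simp
    have tt: "t = drop (tau I) T" using tauI by (simp add: t_def)
    show ?thesis using step nst oo cI' tt II' by metis
  qed
qed

end

theorem mainTheorem4:
  fixes G :: "('a::finite) list set"
  assumes rel_len: "\<forall>w\<in>G. 2 \<le> length w"
      and minimal: "\<forall>u\<in>G. \<forall>w\<in>G. sublist u w \<longrightarrow> u = w"
  shows "(\<forall>T. inj_on fst (occs G T) \<and> anick_numbering (occs G T) first_letter_less)
       \<and> (\<forall>T I q. T \<noteq> [] \<longrightarrow>
            ((I \<subseteq> occs G T \<and> indecomposable T I \<and> cond_I T I \<and> cond_II G T I \<and> card I = q)
             \<longleftrightarrow> (\<exists>t. anick_chain G q T t I)))"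
proof -
  interpret anick_mono G using rel_len minimal by unfold_locales
  have p1: "inj_on fst (occs G T) \<and> anick_numbering (occs G T) first_letter_less" for T
  proof
    show "inj_on fst (occs G T)" by (intro inj_onI) (rule fst_eq)
    show "anick_numbering (occs G T) first_letter_less"
      unfolding anick_numbering_def
    proof (intro ballI impI)
      fix a b c assume a: "a \<in> occs G T" and b: "b \<in> occs G T" and c: "c \<in> occs G T"
        and ab: "first_letter_less a b" and bc: "first_letter_less b c"
      have "en a < en b" using fst_lt_en[OF a b] ab by (simp add: first_letter_less_def)
      then show "occ_pos a \<inter> occ_pos c \<subseteq> occ_pos b \<inter> occ_pos c"
        using ab bc unfolding occ_pos_def first_letter_less_def en_def by auto
    qed
  qed
  have p2: "(I \<subseteq> occs G T \<and> indecomposable T I \<and> cond_I T I \<and> cond_II G T I \<and> card I = q)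
             \<longleftrightarrow> (\<exists>t. anick_chain G q T t I)" if T: "T \<noteq> []" for T I q
  proof
    assume h: "I \<subseteq> occs G T \<and> indecomposable T I \<and> cond_I T I \<and> cond_II G T I \<and> card I = q"
    then have "good T I" by (simp add: good_def)
    then have "anick_chain G (card I) T (drop (tau I) T) I" using good_chain T by blast
    thus "\<exists>t. anick_chain G q T t I" using h by blast
  next
    assume "\<exists>t. anick_chain G q T t I"
    then obtain t where "anick_chain G q T t I" by blast
    then have "good T I" "card I = q" using chain_good by blast+
    thus "I \<subseteq> occs G T \<and> indecomposable T I \<and> cond_I T I \<and> cond_II G T I \<and> card I = q"
      by (simp add: good_def)
  qed
  show ?thesis using p1 p2 by blast
qed

end
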